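(* Let $G_1^o,G_2^o$ be ordered abelian groups and $H_1,H_2$ abelian groups endowed with valuational quasi-orders. Then $G_1^o\boxtimes H_1\equiv G_2^o\boxtimes H_2$ if and only if $G_1^o\equiv G_2^o$ and $H_1\equiv H_2$, where elementary equivalence is in the language $\{0,+,-,\precsim\}$.
   Context: A quasi-order $\precsim$ on an abelian group $H$ is valuational if $a\precsim b\Leftrightarrow w(b)\le w(a)$ for some valuation $w$ on $H$ (a map $w:H\to\Delta\cup\{\infty\}$, $\Delta$ totally ordered, with $w(a)=\infty\Leftrightarrow a=0$, $w(a+b)\ge\min(w(a),w(b))$, $w(-a)=w(a)$). For an ordered abelian group $(A,\le)$ and an abelian group $H$ with a valuational quasi-order $\precsim_H$, the compatible product $A\boxtimes H$ is the group $A\times H$ with the quasi-order $(a,h)\precsim(a',h')\Leftrightarrow(h=h'=0\wedge a\le a')\vee(h'\neq0\wedge h\precsim_H h')$. An ordered group is viewed as an $\{0,+,-,\precsim\}$-structure with $\precsim$ interpreted as its order, a valuationally quasi-ordered group with $\precsim$ interpreted as its quasi-order; $-$ is unary negation. *)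

theory Defs
  imports Main "HOL-Library.Product_Plus"
begin

datatype tm = Var nat | Zero | Plus tm tm | Neg tm

datatype fm = FEq tm tm | FRel tm tm | FFalse | FNot fm | FConj fm fm | FDisj fm fm
  | FImp fm fm | FEx nat fm | FAll nat fm

fun tvars :: "tm \<Rightarrow> nat set" where
  "tvars (Var n) = {n}"
| "tvars Zero = {}"
| "tvars (Plus s t) = tvars s \<union> tvars t"
| "tvars (Neg t) = tvars t"

fun fvars :: "fm \<Rightarrow> nat set" where
  "fvars (FEq s t) = tvars s \<union> tvars t"
| "fvars (FRel s t) = tvars s \<union> tvars t"
| "fvars FFalse = {}"
| "fvars (FNot p) = fvars p"
| "fvars (FConj p q) = fvars p \<union> fvars q"
| "fvars (FDisj p q) = fvars p \<union> fvars q"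
| "fvars (FImp p q) = fvars p \<union> fvars q"
| "fvars (FEx n p) = fvars p - {n}"
| "fvars (FAll n p) = fvars p - {n}"

fun teval :: "(nat \<Rightarrow> 'a::ab_group_add) \<Rightarrow> tm \<Rightarrow> 'a" where
  "teval e (Var n) = e n"
| "teval e Zero = 0"
| "teval e (Plus s t) = teval e s + teval e t"
| "teval e (Neg t) = - teval e t"

fun sat :: "('a::ab_group_add \<Rightarrow> 'a \<Rightarrow> bool) \<Rightarrow> (nat \<Rightarrow> 'a) \<Rightarrow> fm \<Rightarrow> bool" where
  "sat R e (FEq s t) = (teval e s = teval e t)"
| "sat R e (FRel s t) = R (teval e s) (teval e t)"
| "sat R e FFalse = False"
| "sat R e (FNot p) = (\<not> sat R e p)"
| "sat R e (FConj p q) = (sat R e p \<and> sat R e q)"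
| "sat R e (FDisj p q) = (sat R e p \<or> sat R e q)"
| "sat R e (FImp p q) = (sat R e p \<longrightarrow> sat R e q)"
| "sat R e (FEx n p) = (\<exists>x. sat R (e(n := x)) p)"
| "sat R e (FAll n p) = (\<forall>x. sat R (e(n := x)) p)"

definition elem_equiv ::
  "('a::ab_group_add \<Rightarrow> 'a \<Rightarrow> bool) \<Rightarrow> ('b::ab_group_add \<Rightarrow> 'b \<Rightarrow> bool) \<Rightarrow> bool" where
  "elem_equiv R S \<longleftrightarrow>
     (\<forall>\<phi>. fvars \<phi> = {} \<longrightarrow> (sat R (\<lambda>_. 0) \<phi> \<longleftrightarrow> sat S (\<lambda>_. 0) \<phi>))"

definition ordered_group :: "('a::ab_group_add \<Rightarrow> 'a \<Rightarrow> bool) \<Rightarrow> bool" where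
  "ordered_group le \<longleftrightarrow>
     (\<forall>a. le a a) \<and> (\<forall>a b. le a b \<and> le b a \<longrightarrow> a = b) \<and>
     (\<forall>a b c. le a b \<and> le b c \<longrightarrow> le a c) \<and> (\<forall>a b. le a b \<or> le b a) \<and>
     (\<forall>a b c. le a b \<longrightarrow> le (a + c) (b + c))"

text \<open>Values in \<Delta> \<union> {\<infinity>} are represented as 'v option, None = \<infinity>, the top element.\<close>

fun vle :: "'v::linorder option \<Rightarrow> 'v option \<Rightarrow> bool" where
  "vle _ None = True"
| "vle None (Some _) = False"
| "vle (Some x) (Some y) = (x \<le> y)"

definition valuation :: "('a::ab_group_add \<Rightarrow> 'v::linorder option) \<Rightarrow> bool" where
  "valuation w \<longleftrightarrow>
     (\<forall>a. w a = None \<longleftrightarrow> a = 0) \<and>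
     (\<forall>a b. vle (w a) (w (a + b)) \<or> vle (w b) (w (a + b))) \<and>
     (\<forall>a. w (- a) = w a)"

definition valuational_via ::
  "('a::ab_group_add \<Rightarrow> 'v::linorder option) \<Rightarrow> ('a \<Rightarrow> 'a \<Rightarrow> bool) \<Rightarrow> bool" where
  "valuational_via w q \<longleftrightarrow> valuation w \<and> (\<forall>a b. q a b \<longleftrightarrow> vle (w b) (w a))"

definition compat_prod ::
  "('a::ab_group_add \<Rightarrow> 'a \<Rightarrow> bool) \<Rightarrow> ('b::ab_group_add \<Rightarrow> 'b \<Rightarrow> bool)
     \<Rightarrow> ('a \<times> 'b) \<Rightarrow> ('a \<times> 'b) \<Rightarrow> bool" where
  "compat_prod le q x y \<longleftrightarrow>
     (snd x = 0 \<and> snd y = 0 \<and> le (fst x) (fst y)) \<or> (snd y \<noteq> 0 \<and> q (snd x) (snd y))"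

end

theory Submission
  imports Defs
begin

lemma teval_prod:
  "teval (e :: nat \<Rightarrow> ('a::ab_group_add \<times> 'b::ab_group_add)) t
     = (teval (fst \<circ> e) t, teval (snd \<circ> e) t)"
  by (induction t) (auto simp: prod_eq_iff)

lemma fst_upd: "fst \<circ> e(n := x) = (fst \<circ> e)(n := fst x)" by (auto simp: fun_eq_iff)
lemma snd_upd: "snd \<circ> e(n := x) = (snd \<circ> e)(n := snd x)" by (auto simp: fun_eq_iff)

definition TT :: fm where "TT = FNot FFalse"

lemma sat_TT[simp]: "sat R e TT" by (simp add: TT_def)
lemma fvars_TT[simp]: "fvars TT = {}" by (simp add: TT_def)

fun negL :: "(fm \<times> fm) list \<Rightarrow> (fm \<times> fm) list" where
  "negL [] = [(TT,TT)]"
| "negL ((a,b)#L) = map (\<lambda>(x,y). (FConj x (FNot a), y)) (negL L)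
                   @ map (\<lambda>(x,y). (x, FConj y (FNot b))) (negL L)"

definition conjL :: "(fm \<times> fm) list \<Rightarrow> (fm \<times> fm) list \<Rightarrow> (fm \<times> fm) list" where
  "conjL L M = concat (map (\<lambda>p. map (\<lambda>r. (FConj (fst p) (fst r), FConj (snd p) (snd r))) M) L)"

definition exL :: "nat \<Rightarrow> (fm \<times> fm) list \<Rightarrow> (fm \<times> fm) list" where
  "exL n L = map (\<lambda>p. (FEx n (fst p), FEx n (snd p))) L"

fun fv :: "fm \<Rightarrow> (fm \<times> fm) list" where
  "fv (FEq s t) = [(FEq s t, FEq s t)]"
| "fv (FRel s t) = [(FRel s t, FConj (FEq s Zero) (FEq t Zero)),
                    (TT, FConj (FNot (FEq t Zero)) (FRel s t))]"
| "fv FFalse = []"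
| "fv (FNot p) = negL (fv p)"
| "fv (FConj p q) = conjL (fv p) (fv q)"
| "fv (FDisj p q) = fv p @ fv q"
| "fv (FImp p q) = negL (fv p) @ fv q"
| "fv (FEx n p) = exL n (fv p)"
| "fv (FAll n p) = negL (exL n (negL (fv p)))"

definition holdsL where
  "holdsL le q eG eH L = (\<exists>p\<in>set L. sat le eG (fst p) \<and> sat q eH (snd p))"

lemma holds_negL: "holdsL le q eG eH (negL L) \<longleftrightarrow> \<not> holdsL le q eG eH L"
proof (induction L rule: negL.induct)
  case 1 then show ?case by (simp add: holdsL_def)
next
  case (2 a b L)
  let ?R = "negL L"
  have "holdsL le q eG eH (negL ((a,b)#L)) \<longleftrightarrow>
    (\<exists>p\<in>set ?R. sat le eG (fst p) \<and> \<not> sat le eG a \<and> sat q eH (snd p)) \<or>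
    (\<exists>p\<in>set ?R. sat le eG (fst p) \<and> sat q eH (snd p) \<and> \<not> sat q eH b)"
    unfolding negL.simps holdsL_def set_append set_map Bex_def image_iff by fastforce
  also have "\<dots> \<longleftrightarrow> holdsL le q eG eH ?R \<and> \<not> (sat le eG a \<and> sat q eH b)"
    unfolding holdsL_def by blast
  finally show ?case using 2 by (auto simp: holdsL_def)
qed

lemma holds_conjL: "holdsL le q eG eH (conjL L M) \<longleftrightarrow> holdsL le q eG eH L \<and> holdsL le q eG eH M"
  unfolding holdsL_def conjL_def set_concat set_map Bex_def image_iff by fastforce

lemma holds_exL: "holdsL le q eG eH (exL n L) \<longleftrightarrow> (\<exists>a h. holdsL le q (eG(n:=a)) (eH(n:=h)) L)"
  unfolding holdsL_def exL_def by auto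

lemma holds_append: "holdsL le q eG eH (L @ M) \<longleftrightarrow> holdsL le q eG eH L \<or> holdsL le q eG eH M"
  by (auto simp: holdsL_def)

lemma fv_sat:
  "sat (compat_prod le q) e \<phi> \<longleftrightarrow> holdsL le q (fst \<circ> e) (snd \<circ> e) (fv \<phi>)"
proof (induction \<phi> arbitrary: e)
  case (FEq s t) then show ?case
    by (simp add: holdsL_def teval_prod[of e] prod_eq_iff del: comp_apply)
next
  case (FRel s t) then show ?case
    by (auto simp: holdsL_def teval_prod[of e] compat_prod_def simp del: comp_apply)
next
  case FFalse then show ?case by (simp add: holdsL_def)
next
  case (FNot p) then show ?case by (simp add: holds_negL)
next
  case (FConj p1 p2) then show ?case by (simp add: holds_conjL)
next
  case (FDisj p1 p2) then show ?case by (simp add: holds_append)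
next
  case (FImp p1 p2) then show ?case by (simp add: holds_append holds_negL)
next
  case (FEx n p)
  have "sat (compat_prod le q) e (FEx n p) \<longleftrightarrow>
     (\<exists>x. holdsL le q (fst \<circ> e(n := x)) (snd \<circ> e(n := x)) (fv p))"
    by (simp only: sat.simps FEx.IH)
  also have "\<dots> \<longleftrightarrow>
     (\<exists>x. holdsL le q ((fst \<circ> e)(n := fst x)) ((snd \<circ> e)(n := snd x)) (fv p))"
    by (simp only: fst_upd snd_upd)
  also have "\<dots> \<longleftrightarrow> (\<exists>a h. holdsL le q ((fst \<circ> e)(n := a)) ((snd \<circ> e)(n := h)) (fv p))"
    by (metis fst_conv snd_conv)
  finally have X: "sat (compat_prod le q) e (FEx n p) \<longleftrightarrow> (\<exists>a h. holdsL le q ((fst \<circ> e)(n := a)) ((snd \<circ> e)(n := h)) (fv p))" .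
  show ?case unfolding fv.simps holds_exL using X by blast
next
  case (FAll n p)
  have "sat (compat_prod le q) e (FAll n p) \<longleftrightarrow>
     (\<forall>x. holdsL le q (fst \<circ> e(n := x)) (snd \<circ> e(n := x)) (fv p))"
    by (simp only: sat.simps FAll.IH)
  also have "\<dots> \<longleftrightarrow>
     (\<forall>x. holdsL le q ((fst \<circ> e)(n := fst x)) ((snd \<circ> e)(n := snd x)) (fv p))"
    by (simp only: fst_upd snd_upd)
  also have "\<dots> \<longleftrightarrow> (\<forall>a h. holdsL le q ((fst \<circ> e)(n := a)) ((snd \<circ> e)(n := h)) (fv p))"
    by (metis fst_conv snd_conv)
  finally have X: "sat (compat_prod le q) e (FAll n p) \<longleftrightarrow> (\<forall>a h. holdsL le q ((fst \<circ> e)(n := a)) ((snd \<circ> e)(n := h)) (fv p))" .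
  show ?case unfolding fv.simps holds_exL holds_negL using X by blast
qed

definition vL :: "(fm \<times> fm) list \<Rightarrow> nat set" where
  "vL L = (\<Union>p\<in>set L. fvars (fst p) \<union> fvars (snd p))"

lemma vL_app: "vL (L @ M) = vL L \<union> vL M" by (auto simp: vL_def)
lemma vL_Cons: "vL (p # M) = fvars (fst p) \<union> fvars (snd p) \<union> vL M" by (auto simp: vL_def)

lemma vL_negL: "vL (negL L) \<subseteq> vL L"
proof (induction L rule: negL.induct)
  case 1 then show ?case by (simp add: vL_def)
next
  case (2 a b L)
  have "vL (map (\<lambda>(x,y). (FConj x (FNot a), y)) (negL L)) \<subseteq> vL (negL L) \<union> fvars a"
    unfolding vL_def by auto
  moreover have "vL (map (\<lambda>(x,y). (x, FConj y (FNot b))) (negL L)) \<subseteq> vL (negL L) \<union> fvars b"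
    unfolding vL_def by auto
  ultimately show ?case using 2 unfolding negL.simps vL_app by (auto simp: vL_Cons)
qed

lemma vL_conjL: "vL (conjL L M) \<subseteq> vL L \<union> vL M"
  by (auto simp: vL_def conjL_def)

lemma vL_exL: "vL (exL n L) \<subseteq> vL L - {n}"
  by (auto simp: vL_def exL_def)

lemma vL_fv: "vL (fv \<phi>) \<subseteq> fvars \<phi>"
proof (induction \<phi>)
  case (FNot p) then show ?case using vL_negL by (simp, blast)
next
  case (FConj p1 p2) then show ?case using vL_conjL[of "fv p1" "fv p2"] by auto
next
  case (FDisj p1 p2) then show ?case by (auto simp: vL_def)
next
  case (FImp p1 p2) then show ?case using vL_negL[of "fv p1"] by (simp add: vL_app) blast
next
  case (FEx n p) then show ?case using vL_exL[of n "fv p"] by auto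
next
  case (FAll n p) then show ?case
    using vL_exL[of n "negL (fv p)"] vL_negL[of "fv p"] vL_negL[of "exL n (negL (fv p))"] by auto
qed (auto simp: vL_def)

definition dz :: "tm \<Rightarrow> fm" where "dz t = FDisj (FRel t Zero) (FRel (Neg t) Zero)"

lemma fvars_dz[simp]: "fvars (dz t) = tvars t" by (simp add: dz_def)

lemma sat_dz:
  assumes "ordered_group le"
  shows "sat (compat_prod le q) e (dz t) \<longleftrightarrow> snd (teval e t) = 0"
proof -
  obtain a h where ah: "teval e t = (a,h)" by (cases "teval e t")
  have "h = 0 \<Longrightarrow> le a 0 \<or> le (-a) 0"
  proof -
    have "le a 0 \<or> le 0 a" using assms unfolding ordered_group_def by blast
    moreover have "le 0 a \<Longrightarrow> le (-a) 0"
    proof -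
      assume "le 0 a"
      then have "le (0 + -a) (a + -a)" using assms unfolding ordered_group_def by blast
      then show "le (-a) 0" by simp
    qed
    ultimately show "le a 0 \<or> le (-a) 0" by blast
  qed
  then show ?thesis by (simp add: dz_def compat_prod_def ah) blast
qed

fun relG :: "fm \<Rightarrow> fm" where
  "relG (FEq s t) = FEq s t"
| "relG (FRel s t) = FRel s t"
| "relG FFalse = FFalse"
| "relG (FNot p) = FNot (relG p)"
| "relG (FConj p q) = FConj (relG p) (relG q)"
| "relG (FDisj p q) = FDisj (relG p) (relG q)"
| "relG (FImp p q) = FImp (relG p) (relG q)"
| "relG (FEx n p) = FEx n (FConj (dz (Var n)) (relG p))"
| "relG (FAll n p) = FAll n (FImp (dz (Var n)) (relG p))"

lemma fvars_relG: "fvars (relG \<phi>) \<subseteq> fvars \<phi>"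
  by (induction \<phi>) auto

lemma teval_snd0: "(\<forall>n. snd (e n) = 0) \<Longrightarrow> snd (teval e t) = 0"
  by (induction t) auto

lemma sat_relG:
  assumes "ordered_group le"
  shows "(\<forall>n. snd (e n) = 0) \<Longrightarrow>
     sat (compat_prod le q) e (relG \<phi>) \<longleftrightarrow> sat le (fst \<circ> e) \<phi>"
proof (induction \<phi> arbitrary: e)
  case (FEq s t) then show ?case
    using teval_snd0[OF FEq, of s] teval_snd0[OF FEq, of t]
    by (auto simp: teval_prod[of e] prod_eq_iff simp del: comp_apply)
next
  case (FRel s t) then show ?case
    using teval_snd0[OF FRel, of s] teval_snd0[OF FRel, of t]
    by (auto simp: teval_prod[of e] compat_prod_def simp del: comp_apply)
next
  case (FEx n p)
  show ?case
  proof
    assume "sat (compat_prod le q) e (relG (FEx n p))"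
    then obtain x where x: "snd x = 0" "sat (compat_prod le q) (e(n:=x)) (relG p)"
      by (auto simp: sat_dz[OF assms])
    have P: "\<forall>m. snd ((e(n:=x)) m) = 0" using x FEx.prems by auto
    have "sat le (fst \<circ> e(n:=x)) p" using FEx.IH[OF P] x by blast
    then show "sat le (fst \<circ> e) (FEx n p)" by (auto simp: fst_upd)
  next
    assume "sat le (fst \<circ> e) (FEx n p)"
    then obtain a where a: "sat le ((fst \<circ> e)(n:=a)) p" by auto
    have P: "\<forall>m. snd ((e(n:=(a,0))) m) = 0" using FEx.prems by simp
    have F: "fst \<circ> e(n:=(a,0)) = (fst \<circ> e)(n:=a)" by (simp add: fst_upd)
    have "sat (compat_prod le q) (e(n:=(a,0))) (relG p)"
      using FEx.IH[OF P] a unfolding F by blast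
    moreover have "sat (compat_prod le q) (e(n:=(a,0))) (dz (Var n))"
      by (simp add: sat_dz[OF assms])
    ultimately show "sat (compat_prod le q) e (relG (FEx n p))"
      unfolding relG.simps sat.simps by blast
  qed
next
  case (FAll n p)
  show ?case
  proof
    assume A: "sat (compat_prod le q) e (relG (FAll n p))"
    show "sat le (fst \<circ> e) (FAll n p)"
      unfolding sat.simps
    proof (intro allI)
      fix a
      have P: "\<forall>m. snd ((e(n:=(a,0))) m) = 0" using FAll.prems by simp
      have F: "fst \<circ> e(n:=(a,0)) = (fst \<circ> e)(n:=a)" by (simp add: fst_upd)
      have D: "sat (compat_prod le q) (e(n:=(a,0))) (dz (Var n))"
        by (simp add: sat_dz[OF assms])
      have "sat (compat_prod le q) (e(n:=(a,0))) (relG p)"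
        using A D unfolding relG.simps sat.simps by blast
      then show "sat le ((fst \<circ> e)(n:=a)) p"
        using FAll.IH[OF P] unfolding F by blast
    qed
  next
    assume A: "sat le (fst \<circ> e) (FAll n p)"
    show "sat (compat_prod le q) e (relG (FAll n p))"
      unfolding relG.simps sat.simps
    proof (intro allI impI)
      fix x :: "'a \<times> 'b"
      assume "sat (compat_prod le q) (e(n:=x)) (dz (Var n))"
      then have x: "snd x = 0" by (simp add: sat_dz[OF assms])
      have P: "\<forall>m. snd ((e(n:=x)) m) = 0" using FAll.prems x by simp
      have F: "fst \<circ> e(n:=x) = (fst \<circ> e)(n:=fst x)" by (simp add: fst_upd)
      have "sat le ((fst \<circ> e)(n:=fst x)) p" using A by simp
      then show "sat (compat_prod le q) (e(n:=x)) (relG p)"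
        using FAll.IH[OF P] unfolding F by blast
    qed
  qed
qed auto

fun trH :: "fm \<Rightarrow> fm" where
  "trH (FEq s t) = dz (Plus s (Neg t))"
| "trH (FRel s t) = FDisj (FConj (dz s) (dz t)) (FConj (FNot (dz t)) (FRel s t))"
| "trH FFalse = FFalse"
| "trH (FNot p) = FNot (trH p)"
| "trH (FConj p q) = FConj (trH p) (trH q)"
| "trH (FDisj p q) = FDisj (trH p) (trH q)"
| "trH (FImp p q) = FImp (trH p) (trH q)"
| "trH (FEx n p) = FEx n (trH p)"
| "trH (FAll n p) = FAll n (trH p)"

lemma fvars_trH: "fvars (trH \<phi>) \<subseteq> fvars \<phi>"
  by (induction \<phi>) auto

lemma q_zero:
  assumes "valuational_via w q"
  shows "q h 0 \<longleftrightarrow> h = 0"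
proof -
  have v: "valuation w" and qq: "\<And>a b. q a b \<longleftrightarrow> vle (w b) (w a)"
    using assms by (auto simp: valuational_via_def)
  have w0: "\<And>a. w a = None \<longleftrightarrow> a = 0" using v by (auto simp: valuation_def)
  show ?thesis using w0[of 0] w0[of h] qq[of h 0]
    by (cases "w h") auto
qed

lemma sat_trH:
  assumes "ordered_group le" "valuational_via w q"
  shows "sat (compat_prod le q) e (trH \<phi>) \<longleftrightarrow> sat q (snd \<circ> e) \<phi>"
proof (induction \<phi> arbitrary: e)
  case (FEq s t)
  have "sat (compat_prod le q) e (trH (FEq s t)) \<longleftrightarrow> snd (teval e s) - snd (teval e t) = 0"
    by (simp add: sat_dz[OF assms(1)])
  also have "\<dots> \<longleftrightarrow> teval (snd \<circ> e) s = teval (snd \<circ> e) t"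
    unfolding teval_prod[of e s] teval_prod[of e t] by simp
  finally show ?case by (simp only: sat.simps)
next
  case (FRel s t)
  obtain a h where 1: "teval e s = (a,h)" by (cases "teval e s")
  obtain a' h' where 2: "teval e t = (a',h')" by (cases "teval e t")
  have hs: "teval (snd \<circ> e) s = h" using teval_prod[of e s] 1 by simp
  have ht: "teval (snd \<circ> e) t = h'" using teval_prod[of e t] 2 by simp
  have qz: "q h 0 \<longleftrightarrow> h = 0" by (rule q_zero[OF assms(2)])
  have "sat (compat_prod le q) e (trH (FRel s t)) \<longleftrightarrow>
     (h = 0 \<and> h' = 0) \<or> (h' \<noteq> 0 \<and> compat_prod le q (a,h) (a',h'))"
    by (simp add: sat_dz[OF assms(1)] 1 2)
  also have "\<dots> \<longleftrightarrow> q h h'"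
    using qz by (cases "h' = 0") (auto simp: compat_prod_def)
  finally show ?case by (simp only: sat.simps hs ht)
next
  case (FEx n p)
  have "sat (compat_prod le q) e (trH (FEx n p)) \<longleftrightarrow> (\<exists>x. sat q (snd \<circ> e(n := x)) p)"
    by (simp only: sat.simps trH.simps FEx.IH)
  also have "\<dots> \<longleftrightarrow> (\<exists>x::'a \<times> 'b. sat q ((snd \<circ> e)(n := snd x)) p)"
    by (simp only: snd_upd)
  also have "\<dots> \<longleftrightarrow> (\<exists>h. sat q ((snd \<circ> e)(n := h)) p)" by (metis snd_conv)
  finally show ?case by (simp only: sat.simps)
next
  case (FAll n p)
  have "sat (compat_prod le q) e (trH (FAll n p)) \<longleftrightarrow> (\<forall>x. sat q (snd \<circ> e(n := x)) p)"
    by (simp only: sat.simps trH.simps FAll.IH)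
  also have "\<dots> \<longleftrightarrow> (\<forall>x::'a \<times> 'b. sat q ((snd \<circ> e)(n := snd x)) p)"
    by (simp only: snd_upd)
  also have "\<dots> \<longleftrightarrow> (\<forall>h. sat q ((snd \<circ> e)(n := h)) p)" by (metis snd_conv)
  finally show ?case by (simp only: sat.simps)
qed auto

lemma fst0: "fst \<circ> (\<lambda>_. 0 :: 'a::ab_group_add \<times> 'b::ab_group_add) = (\<lambda>_. 0)"
  by (simp add: fun_eq_iff)
lemma snd0: "snd \<circ> (\<lambda>_. 0 :: 'a::ab_group_add \<times> 'b::ab_group_add) = (\<lambda>_. 0)"
  by (simp add: fun_eq_iff)

theorem mainTheorem17:
  fixes le1 :: "'a::ab_group_add \<Rightarrow> 'a \<Rightarrow> bool"
    and le2 :: "'c::ab_group_add \<Rightarrow> 'c \<Rightarrow> bool"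
    and q1 :: "'b::ab_group_add \<Rightarrow> 'b \<Rightarrow> bool"
    and q2 :: "'d::ab_group_add \<Rightarrow> 'd \<Rightarrow> bool"
    and w1 :: "'b \<Rightarrow> 'v1::linorder option"
    and w2 :: "'d \<Rightarrow> 'v2::linorder option"
  assumes "ordered_group le1" and "ordered_group le2"
    and "valuational_via w1 q1" and "valuational_via w2 q2"
  shows "elem_equiv (compat_prod le1 q1) (compat_prod le2 q2) \<longleftrightarrow>
           (elem_equiv le1 le2 \<and> elem_equiv q1 q2)"
proof
  assume E: "elem_equiv (compat_prod le1 q1) (compat_prod le2 q2)"
  show "elem_equiv le1 le2 \<and> elem_equiv q1 q2"
  proof
    show "elem_equiv le1 le2" unfolding elem_equiv_def
    proof (intro allI impI)
      fix \<phi> assume f: "fvars \<phi> = {}"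
      then have f': "fvars (relG \<phi>) = {}" using fvars_relG[of \<phi>] by auto
      have "sat le1 (\<lambda>_. 0) \<phi> \<longleftrightarrow> sat (compat_prod le1 q1) (\<lambda>_. 0) (relG \<phi>)"
        using sat_relG[OF assms(1), of "\<lambda>_. 0" q1 \<phi>] unfolding fst0 by simp
      also have "\<dots> \<longleftrightarrow> sat (compat_prod le2 q2) (\<lambda>_. 0) (relG \<phi>)"
        using E f' unfolding elem_equiv_def by blast
      also have "\<dots> \<longleftrightarrow> sat le2 (\<lambda>_. 0) \<phi>"
        using sat_relG[OF assms(2), of "\<lambda>_. 0" q2 \<phi>] unfolding fst0 by simp
      finally show "sat le1 (\<lambda>_. 0) \<phi> \<longleftrightarrow> sat le2 (\<lambda>_. 0) \<phi>" .
    qed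
    show "elem_equiv q1 q2" unfolding elem_equiv_def
    proof (intro allI impI)
      fix \<phi> assume f: "fvars \<phi> = {}"
      then have f': "fvars (trH \<phi>) = {}" using fvars_trH[of \<phi>] by auto
      have "sat q1 (\<lambda>_. 0) \<phi> \<longleftrightarrow> sat (compat_prod le1 q1) (\<lambda>_. 0) (trH \<phi>)"
        using sat_trH[OF assms(1) assms(3), of "\<lambda>_. 0" \<phi>] unfolding snd0 by simp
      also have "\<dots> \<longleftrightarrow> sat (compat_prod le2 q2) (\<lambda>_. 0) (trH \<phi>)"
        using E f' unfolding elem_equiv_def by blast
      also have "\<dots> \<longleftrightarrow> sat q2 (\<lambda>_. 0) \<phi>"
        using sat_trH[OF assms(2) assms(4), of "\<lambda>_. 0" \<phi>] unfolding snd0 by simp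
      finally show "sat q1 (\<lambda>_. 0) \<phi> \<longleftrightarrow> sat q2 (\<lambda>_. 0) \<phi>" .
    qed
  qed
next
  assume E: "elem_equiv le1 le2 \<and> elem_equiv q1 q2"
  show "elem_equiv (compat_prod le1 q1) (compat_prod le2 q2)" unfolding elem_equiv_def
  proof (intro allI impI)
    fix \<phi> assume f: "fvars \<phi> = {}"
    have v: "\<And>p. p \<in> set (fv \<phi>) \<Longrightarrow> fvars (fst p) = {} \<and> fvars (snd p) = {}"
      using vL_fv[of \<phi>] f by (auto simp: vL_def)
    have "sat (compat_prod le1 q1) (\<lambda>_. 0) \<phi> \<longleftrightarrow> holdsL le1 q1 (\<lambda>_. 0) (\<lambda>_. 0) (fv \<phi>)"
      using fv_sat[of le1 q1 "\<lambda>_. 0" \<phi>] unfolding fst0 snd0 .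
    also have "\<dots> \<longleftrightarrow> holdsL le2 q2 (\<lambda>_. 0) (\<lambda>_. 0) (fv \<phi>)"
      unfolding holdsL_def
    proof (rule bex_cong[OF refl])
      fix p assume "p \<in> set (fv \<phi>)"
      then have "fvars (fst p) = {}" "fvars (snd p) = {}" using v by auto
      then have "sat le1 (\<lambda>_. 0) (fst p) = sat le2 (\<lambda>_. 0) (fst p)"
        "sat q1 (\<lambda>_. 0) (snd p) = sat q2 (\<lambda>_. 0) (snd p)"
        using E unfolding elem_equiv_def by blast+
      then show "(sat le1 (\<lambda>_. 0) (fst p) \<and> sat q1 (\<lambda>_. 0) (snd p)) =
                 (sat le2 (\<lambda>_. 0) (fst p) \<and> sat q2 (\<lambda>_. 0) (snd p))" by simp
    qed
    also have "\<dots> \<longleftrightarrow> sat (compat_prod le2 q2) (\<lambda>_. 0) \<phi>"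
      using fv_sat[of le2 q2 "\<lambda>_. 0" \<phi>] unfolding fst0 snd0 by simp
    finally show "sat (compat_prod le1 q1) (\<lambda>_. 0) \<phi> \<longleftrightarrow> sat (compat_prod le2 q2) (\<lambda>_. 0) \<phi>" .
  qed
qed

end
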